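(* Let $R$ be a ring and let $A$, $B$, $C'$ be matrices over $R$ of sizes $p\times q$, $q\times r$ and $p\times r$, respectively. Suppose that $C'$ differs from the matrix product $C=A\times B$ in exactly one entry. Then there is a deterministic algorithm that, given $A$, $B$, $C'$, identifies this entry and corrects it (i.e., outputs $C$) in $O(pq+qr+pr)$ time, that is, in time linear in the total number of entries of the three matrices.
   Context: Running time is measured in a unit-cost model in which each ring operation (addition, subtraction, multiplication) and each elementary comparison or index operation costs $O(1)$. *)

theory Defs
  imports Main
begin

text \<open>
Matrices of size m x n over a ring are represented as functions nat => nat => 'a,
only the entries with indices i < m, j < n being meaningful.
The algorithm is written in an explicit cost-annotated style: every computation
returns a pair (value, number of unit-cost operations used).  Each entry access,
ring operation, comparison and loop/index step is charged at least 1.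
\<close>

definition mat_mult :: "nat \<Rightarrow> (nat \<Rightarrow> nat \<Rightarrow> 'a::ring) \<Rightarrow> (nat \<Rightarrow> nat \<Rightarrow> 'a) \<Rightarrow> nat \<Rightarrow> nat \<Rightarrow> 'a" where
  "mat_mult q A B i j = (\<Sum>k<q. A i k * B k j)"

fun sumc :: "nat \<Rightarrow> (nat \<Rightarrow> 'a::ring \<times> nat) \<Rightarrow> 'a \<times> nat" where
  "sumc 0 f = (0, 1)"
| "sumc (Suc n) f = (let (s, c1) = sumc n f; (x, c2) = f n in (s + x, c1 + c2 + 1))"

text \<open>Tabulate n costed values into an array (later lookups cost 1 each).\<close>
definition tabc :: "nat \<Rightarrow> (nat \<Rightarrow> 'a::ring \<times> nat) \<Rightarrow> (nat \<Rightarrow> 'a) \<times> nat" where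
  "tabc n f = ((\<lambda>k. if k < n then fst (f k) else 0), (\<Sum>k<n. snd (f k)) + n)"

fun findc :: "nat \<Rightarrow> (nat \<Rightarrow> bool \<times> nat) \<Rightarrow> nat option \<times> nat" where
  "findc 0 P = (None, 1)"
| "findc (Suc n) P = (let (r, c) = findc n P; (b, c') = P n in
     (if r \<noteq> None then r else if b then Some n else None, c + c' + 1))"

text \<open>The correction algorithm: compare row sums of A(B1) with C'1 and column sums
of (1A)B with 1C' to locate the faulty row i and column j, then recompute C i j.
Returns ((i, j), corrected matrix) together with the total cost (including p*r for
writing out the output matrix).\<close>
definition correct_alg ::
  "nat \<Rightarrow> nat \<Rightarrow> nat \<Rightarrow> (nat \<Rightarrow> nat \<Rightarrow> 'a::ring) \<Rightarrow> (nat \<Rightarrow> nat \<Rightarrow> 'a) \<Rightarrow> (nat \<Rightarrow> nat \<Rightarrow> 'a)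
   \<Rightarrow> ((nat \<times> nat) \<times> (nat \<Rightarrow> nat \<Rightarrow> 'a)) \<times> nat" where
  "correct_alg p q r A B C' =
    (let (u, c1) = tabc q (\<lambda>k. sumc r (\<lambda>j. (B k j, 1)));
         (v, c2) = tabc q (\<lambda>k. sumc p (\<lambda>i. (A i k, 1)));
         (ri, c3) = findc p (\<lambda>i. let (x, a) = sumc q (\<lambda>k. (A i k * u k, 3));
                                     (y, b) = sumc r (\<lambda>j. (C' i j, 1))
                                 in (x \<noteq> y, a + b + 1));
         (cj, c4) = findc r (\<lambda>j. let (x, a) = sumc q (\<lambda>k. (v k * B k j, 3));
                                     (y, b) = sumc p (\<lambda>i. (C' i j, 1))
                                 in (x \<noteq> y, a + b + 1));
         i = the ri; j = the cj;
         (e, c5) = sumc q (\<lambda>k. (A i k * B k j, 3))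
     in (((i, j), (\<lambda>a b. if a = i \<and> b = j then e else C' a b)),
         c1 + c2 + c3 + c4 + c5 + p * r + 2))"

end

theory Submission imports Defs begin
lemma sumc_fst: "fst (sumc n f) = (\<Sum>k<n. fst (f k))"
  by (induction n) (auto simp: split_beta Let_def)
lemma sumc_snd: "snd (sumc n f) = 1 + (\<Sum>k<n. snd (f k) + 1)"
  by (induction n) (auto simp: split_beta Let_def)
lemma findc_fst: "fst (findc n P) = (if \<exists>i<n. fst (P i) then Some (LEAST i. fst (P i)) else None)"
proof (induction n)
  case 0 then show ?case by simp
next
  case (Suc n)
  show ?case
  proof (cases "\<exists>i<n. fst (P i)")
    case True
    then show ?thesis using Suc by (auto simp: split_beta Let_def intro: less_SucI)
  next
    case False
    then have "(LEAST i. fst (P i)) = n" if "fst (P n)" using that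
      by (intro Least_equality) (auto simp: not_less[symmetric])
    then show ?thesis using Suc False by (auto simp: split_beta Let_def less_Suc_eq)
  qed
qed
lemma findc_snd: "snd (findc n P) = 1 + (\<Sum>k<n. snd (P k) + 1)"
  by (induction n) (auto simp: split_beta Let_def)
lemma cost_eq: "snd (correct_alg p q r A B C') = q*(2+2*r) + q*(2+2*p) + (1+p*(4*q+2*r+4)) + (1+r*(4*q+2*p+4)) + (1+4*q) + p*r+2"
  by (simp add: correct_alg_def Let_def split_beta tabc_def sumc_snd findc_snd algebra_simps)

lemma row_test:
  fixes A B C' :: "nat \<Rightarrow> nat \<Rightarrow> 'a::ring"
  assumes u: "\<forall>i<p. \<forall>j<r. C' i j \<noteq> mat_mult q A B i j \<longleftrightarrow> i = i0 \<and> j = j0"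
    and "i < p" "i0 < p" "j0 < r"
  shows "((\<Sum>k<q. A i k * sum (B k) {..<r}) \<noteq> sum (C' i) {..<r}) \<longleftrightarrow> i = i0"
proof -
  have e: "(\<Sum>k<q. A i k * sum (B k) {..<r}) = (\<Sum>j<r. mat_mult q A B i j)"
    by (simp add: mat_mult_def sum_distrib_left sum.swap[of _ "{..<q}"])
  have "sum (C' i) {..<r} - (\<Sum>j<r. mat_mult q A B i j) = (\<Sum>j<r. C' i j - mat_mult q A B i j)"
    by (simp add: sum_subtractf)
  also have "\<dots> = (\<Sum>j<r. if i = i0 \<and> j = j0 then C' i j - mat_mult q A B i j else 0)"
    using u \<open>i<p\<close> by (intro sum.cong) auto
  also have "\<dots> = (if i = i0 then C' i0 j0 - mat_mult q A B i0 j0 else 0)"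
    using \<open>j0<r\<close> by (auto simp: sum.If_cases)
  note f = calculation
  have c0: "C' i0 j0 \<noteq> mat_mult q A B i0 j0" using u assms by simp
  have d: "C' i0 j0 - mat_mult q A B i0 j0 \<noteq> 0" using c0 by simp
  show ?thesis unfolding e using f c0 assms(2-4) by (cases "i = i0") auto
qed

lemma col_test:
  fixes A B C' :: "nat \<Rightarrow> nat \<Rightarrow> 'a::ring"
  assumes u: "\<forall>i<p. \<forall>j<r. C' i j \<noteq> mat_mult q A B i j \<longleftrightarrow> i = i0 \<and> j = j0"
    and "j < r" "i0 < p" "j0 < r"
  shows "((\<Sum>k<q. (\<Sum>i<p. A i k) * B k j) \<noteq> (\<Sum>i<p. C' i j)) \<longleftrightarrow> j = j0"
proof -
  have e: "(\<Sum>k<q. (\<Sum>i<p. A i k) * B k j) = (\<Sum>i<p. mat_mult q A B i j)"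
    by (simp add: mat_mult_def sum_distrib_right sum.swap[of _ "{..<q}"])
  have "(\<Sum>i<p. C' i j) - (\<Sum>i<p. mat_mult q A B i j) = (\<Sum>i<p. C' i j - mat_mult q A B i j)"
    by (simp add: sum_subtractf)
  also have "\<dots> = (\<Sum>i<p. if i = i0 \<and> j = j0 then C' i j - mat_mult q A B i j else 0)"
    using u \<open>j<r\<close> by (intro sum.cong) auto
  also have "\<dots> = (if j = j0 then C' i0 j0 - mat_mult q A B i0 j0 else 0)"
    using \<open>i0<p\<close> by (auto simp: sum.If_cases)
  note f = calculation
  have c0: "C' i0 j0 \<noteq> mat_mult q A B i0 j0" using u assms by simp
  have d: "C' i0 j0 - mat_mult q A B i0 j0 \<noteq> 0" using c0 by simp
  show ?thesis unfolding e using f c0 assms(2-4) by (cases "j = j0") auto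
qed

lemma sum_if_lt1: "(\<Sum>k<q. f k * (if k < q then g k else 0)) = (\<Sum>k<q. f k * g k)"
  by (rule sum.cong) auto
lemma sum_if_lt2: "(\<Sum>k<q. (if k < q then g k else 0) * f k) = (\<Sum>k<q. g k * f k)"
  by (rule sum.cong) auto

lemma main_fst:
  fixes A B C' :: "nat \<Rightarrow> nat \<Rightarrow> 'a::ring"
  assumes u: "\<forall>i<p. \<forall>j<r. C' i j \<noteq> mat_mult q A B i j \<longleftrightarrow> i = i0 \<and> j = j0"
    and i0: "i0 < p" and j0: "j0 < r"
  shows "fst (correct_alg p q r A B C') = ((i0, j0), \<lambda>a b. if a = i0 \<and> b = j0 then mat_mult q A B i0 j0 else C' a b)"
proof -
  have R: "\<And>i. i < p \<Longrightarrow> ((\<Sum>k<q. A i k * sum (B k) {..<r}) \<noteq> sum (C' i) {..<r}) \<longleftrightarrow> i = i0"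
    using row_test[OF u _ i0 j0] by blast
  have C: "\<And>j. j < r \<Longrightarrow> ((\<Sum>k<q. (\<Sum>i<p. A i k) * B k j) \<noteq> (\<Sum>i<p. C' i j)) \<longleftrightarrow> j = j0"
    using col_test[OF u _ i0 j0] by blast
  have LR: "(LEAST i. (\<Sum>k<q. A i k * sum (B k) {..<r}) \<noteq> sum (C' i) {..<r}) = i0"
    apply (rule Least_equality)
    using R i0 apply blast
  proof (rule ccontr)
    fix y assume P: "(\<Sum>k<q. A y k * sum (B k) {..<r}) \<noteq> sum (C' y) {..<r}" and "\<not> i0 \<le> y"
    then have "y < p" "y \<noteq> i0" using i0 by auto
    then show False using R P by blast
  qed
  have LC: "(LEAST j. (\<Sum>k<q. (\<Sum>i<p. A i k) * B k j) \<noteq> (\<Sum>i<p. C' i j)) = j0"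
    apply (rule Least_equality)
    using C j0 apply blast
  proof (rule ccontr)
    fix y assume P: "(\<Sum>k<q. (\<Sum>i<p. A i k) * B k y) \<noteq> (\<Sum>i<p. C' i y)" and "\<not> j0 \<le> y"
    then have "y < r" "y \<noteq> j0" using j0 by auto
    then show False using C P by blast
  qed
  have ER: "\<exists>i<p. (\<Sum>k<q. A i k * sum (B k) {..<r}) \<noteq> sum (C' i) {..<r}" using R i0 by blast
  have EC: "\<exists>j<r. (\<Sum>k<q. (\<Sum>i<p. A i k) * B k j) \<noteq> (\<Sum>i<p. C' i j)" using C j0 by blast
  show ?thesis
    unfolding correct_alg_def Let_def tabc_def
    apply (simp only: split_beta fst_conv snd_conv sumc_fst)
    apply (simp add: sum_if_lt1 sum_if_lt2 findc_fst LR LC ER EC mat_mult_def cong: if_cong)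
    done
qed

lemma cost_bound:
  assumes "0 < p" "0 < r"
  shows "q*(2+2*r) + q*(2+2*p) + (1+p*(4*q+2*r+4)) + (1+r*(4*q+2*p+4)) + (1+4*q) + p*r+2
     \<le> 20 * (p * q + q * r + p * (r::nat))"
proof -
  have a: "q \<le> p*q" "p \<le> p*r" "r \<le> p*r" "1 \<le> p*r" using assms by auto
  have e1: "q*(2+2*r) + q*(2+2*p) + (1+p*(4*q+2*r+4)) + (1+r*(4*q+2*p+4)) + (1+4*q) + p*r+2
     = 5+4*p+4*r+8*q+6*(p*q)+6*(q*r)+5*(p*r)" by (simp add: algebra_simps)
  have e2: "20 * (p * q + q * r + p * r) = 20*(p*q)+20*(q*r)+20*(p*r)" by (simp add: algebra_simps)
  show ?thesis unfolding e1 e2 using a by linarith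
qed

theorem theorem1:
  "\<exists>K::nat. \<forall>(p::nat) (q::nat) (r::nat) (A :: nat \<Rightarrow> nat \<Rightarrow> 'a::ring) B C'.
     (\<exists>!ij. fst ij < p \<and> snd ij < r \<and> C' (fst ij) (snd ij) \<noteq> mat_mult q A B (fst ij) (snd ij))
     \<longrightarrow> (let ((ij, C), cost) = correct_alg p q r A B C' in
           fst ij < p \<and> snd ij < r \<and> C' (fst ij) (snd ij) \<noteq> mat_mult q A B (fst ij) (snd ij)
           \<and> (\<forall>i<p. \<forall>j<r. C i j = mat_mult q A B i j)
           \<and> cost \<le> K * (p * q + q * r + p * r))"
proof (intro exI allI impI)
  fix p q r :: nat and A B C' :: "nat \<Rightarrow> nat \<Rightarrow> 'a"
  assume "\<exists>!ij. fst ij < p \<and> snd ij < r \<and> C' (fst ij) (snd ij) \<noteq> mat_mult q A B (fst ij) (snd ij)"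
  then obtain i0 j0 where h: "i0 < p" "j0 < r" "C' i0 j0 \<noteq> mat_mult q A B i0 j0"
    and un: "\<And>i j. i < p \<Longrightarrow> j < r \<Longrightarrow> C' i j \<noteq> mat_mult q A B i j \<Longrightarrow> (i, j) = (i0, j0)"
    by (metis fst_conv snd_conv)
  have u: "\<forall>i<p. \<forall>j<r. C' i j \<noteq> mat_mult q A B i j \<longleftrightarrow> i = i0 \<and> j = j0"
    using h un by blast
  obtain res cost where rc: "correct_alg p q r A B C' = (res, cost)" by (cases "correct_alg p q r A B C'")
  have res: "res = ((i0, j0), \<lambda>a b. if a = i0 \<and> b = j0 then mat_mult q A B i0 j0 else C' a b)"
    using main_fst[OF u h(1,2)] rc by simp
  have cost: "cost \<le> 20 * (p * q + q * r + p * r)"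
    using cost_eq[where p=p and q=q and r=r and A=A and B=B and C'=C'] rc cost_bound[where p=p and q=q and r=r] h by simp
  have ok: "\<forall>i<p. \<forall>j<r. (if i = i0 \<and> j = j0 then mat_mult q A B i0 j0 else C' i j) = mat_mult q A B i j"
    using u by auto
  show "let ((ij, C), cost) = correct_alg p q r A B C' in
           fst ij < p \<and> snd ij < r \<and> C' (fst ij) (snd ij) \<noteq> mat_mult q A B (fst ij) (snd ij)
           \<and> (\<forall>i<p. \<forall>j<r. C i j = mat_mult q A B i j)
           \<and> cost \<le> 20 * (p * q + q * r + p * r)"
    unfolding rc res using h cost ok by simp
qed
end
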